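(* Let $H$ be a normal subgroup of a group $G$. If $H$ and $G/H$ are Jordan groups, then any set of pairwise nonisomorphic simple nonabelian finite subgroups of $G$ is finite.
   Context: A group $G$ is called Jordan if there exists a positive integer $d$, depending only on $G$, such that every finite subgroup $K$ of $G$ contains a normal abelian subgroup of index at most $d$ in $K$. *)

theory Defs
  imports "HOL-Algebra.Algebra"
begin

definition jordan_group :: "('a, 'b) monoid_scheme \<Rightarrow> bool" where
  "jordan_group G \<longleftrightarrow> group G \<and>
     (\<exists>d::nat. d > 0 \<and>
        (\<forall>K. subgroup K G \<and> finite K \<longrightarrow>
           (\<exists>A. A \<lhd> (G\<lparr>carrier := K\<rparr>) \<and> comm_group (G\<lparr>carrier := A\<rparr>) \<and>
                card K \<le> d * card A)))"

end

theory Submission imports Defs begin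

lemma finite_noniso:
  fixes G :: "('a, 'b) monoid_scheme" and S :: "'a set set"
  assumes fin: "\<And>K. K \<in> S \<Longrightarrow> finite K \<and> card K \<le> n \<and> (\<forall>x\<in>K. \<forall>y\<in>K. x \<otimes>\<^bsub>G\<^esub> y \<in> K)"
    and ni: "\<And>K L. K \<in> S \<Longrightarrow> L \<in> S \<Longrightarrow> K \<noteq> L \<Longrightarrow> \<not> (G\<lparr>carrier := K\<rparr> \<cong> G\<lparr>carrier := L\<rparr>)"
  shows "finite S"
proof -
  define f :: "'a set \<Rightarrow> nat \<Rightarrow> 'a" where "f K = (SOME f. bij_betw f {..<card K} K)" for K
  have fb: "bij_betw (f K) {..<card K} K" if "K \<in> S" for K
  proof -
    have "\<exists>f. bij_betw f {..<card K} K"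
      using fin[OF that] by (metis bij_betw_the_inv_into lessThan_atLeast0 ex_bij_betw_nat_finite)
    then show ?thesis unfolding f_def by (rule someI_ex)
  qed
  define tab :: "'a set \<Rightarrow> nat \<times> (nat \<Rightarrow> nat \<Rightarrow> nat)" where "tab K = (card K, \<lambda>i\<in>{..<card K}. \<lambda>j\<in>{..<card K}.
      inv_into {..<card K} (f K) (f K i \<otimes>\<^bsub>G\<^esub> f K j))" for K
  define T where "T = (\<Union>m\<le>n. {m} \<times> ({..<m} \<rightarrow>\<^sub>E ({..<m} \<rightarrow>\<^sub>E {..<m})))"
  have "finite T" unfolding T_def by (auto intro!: finite_PiE)
  have img: "tab ` S \<subseteq> T"
  proof
    fix t assume "t \<in> tab ` S"
    then obtain K where K: "K \<in> S" "t = tab K" by auto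
    have b: "bij_betw (f K) {..<card K} K" using fb[OF K(1)] .
    show "t \<in> T" unfolding T_def K(2) tab_def
    proof (rule UN_I[of "card K"])
      show "card K \<in> {..n}" using fin[OF K(1)] by auto
      show "(card K, \<lambda>i\<in>{..<card K}. \<lambda>j\<in>{..<card K}. inv_into {..<card K} (f K) (f K i \<otimes>\<^bsub>G\<^esub> f K j))
        \<in> {card K} \<times> ({..<card K} \<rightarrow>\<^sub>E {..<card K} \<rightarrow>\<^sub>E {..<card K})"
      proof (auto simp: PiE_iff)
        fix i j assume "i < card K" "j < card K"
        then have "f K i \<otimes>\<^bsub>G\<^esub> f K j \<in> K" using fin[OF K(1)] b
          by (meson bij_betwE lessThan_iff)
        then show "inv_into {..<card K} (f K) (f K i \<otimes>\<^bsub>G\<^esub> f K j) < card K"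
          using b by (metis bij_betw_def inv_into_into lessThan_iff)
      qed
    qed
  qed
  have inj: "inj_on tab S"
  proof (rule inj_onI, rule ccontr)
    fix K L assume K: "K \<in> S" and L: "L \<in> S" and eq: "tab K = tab L" and ne: "K \<noteq> L"
    have c: "card K = card L" using eq unfolding tab_def by simp
    define m where "m = card K"
    have bK: "bij_betw (f K) {..<m} K" using fb[OF K] m_def by simp
    have bL: "bij_betw (f L) {..<m} L" using fb[OF L] m_def c by simp
    have tb: "\<And>i j. i < m \<Longrightarrow> j < m \<Longrightarrow> inv_into {..<m} (f K) (f K i \<otimes>\<^bsub>G\<^esub> f K j)
       = inv_into {..<m} (f L) (f L i \<otimes>\<^bsub>G\<^esub> f L j)"
    proof -
      fix i j assume "i < m" "j < m"
      have "snd (tab K) i j = snd (tab L) i j" using eq by simp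
      then show "?thesis i j" using \<open>i < m\<close> \<open>j < m\<close> c unfolding tab_def m_def by simp
    qed
    define h where "h = f L \<circ> inv_into {..<m} (f K)"
    have hb: "bij_betw h K L" unfolding h_def
      using bij_betw_trans[OF bij_betw_inv_into[OF bK] bL] .
    have "h \<in> iso (G\<lparr>carrier := K\<rparr>) (G\<lparr>carrier := L\<rparr>)"
    proof (rule isoI)
      show "bij_betw h (carrier (G\<lparr>carrier := K\<rparr>)) (carrier (G\<lparr>carrier := L\<rparr>))" using hb by simp
      show "h \<in> hom (G\<lparr>carrier := K\<rparr>) (G\<lparr>carrier := L\<rparr>)"
      proof (rule homI)
        fix x assume "x \<in> carrier (G\<lparr>carrier := K\<rparr>)"
        then show "h x \<in> carrier (G\<lparr>carrier := L\<rparr>)" using hb by (simp add: bij_betwE)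
      next
        fix x y assume xy: "x \<in> carrier (G\<lparr>carrier := K\<rparr>)" "y \<in> carrier (G\<lparr>carrier := K\<rparr>)"
        then obtain i j where ij: "i < m" "j < m" "x = f K i" "y = f K j"
          using bK by (simp add: bij_betw_def) (metis imageE lessThan_iff)
        have ix: "inv_into {..<m} (f K) x = i" "inv_into {..<m} (f K) y = j"
          using ij bK by (simp_all add: bij_betw_def inv_into_f_f)
        have "h (x \<otimes>\<^bsub>G\<^esub> y) = f L (inv_into {..<m} (f L) (f L i \<otimes>\<^bsub>G\<^esub> f L j))"
          unfolding h_def using tb[OF ij(1,2)] ij by simp
        also have "\<dots> = f L i \<otimes>\<^bsub>G\<^esub> f L j"
        proof (rule f_inv_into_f)
          have "f L i \<in> L" "f L j \<in> L" using bL ij by (auto dest: bij_betwE)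
          then have "f L i \<otimes>\<^bsub>G\<^esub> f L j \<in> L" using fin[OF L] by blast
          then show "f L i \<otimes>\<^bsub>G\<^esub> f L j \<in> f L ` {..<m}" using bL by (simp add: bij_betw_def)
        qed
        also have "\<dots> = h x \<otimes>\<^bsub>G\<^esub> h y" unfolding h_def using ix by simp
        finally show "h (x \<otimes>\<^bsub>G\<lparr>carrier := K\<rparr>\<^esub> y) = h x \<otimes>\<^bsub>G\<lparr>carrier := L\<rparr>\<^esub> h y" by simp
      qed
    qed
    then have "G\<lparr>carrier := K\<rparr> \<cong> G\<lparr>carrier := L\<rparr>" by (rule is_isoI)
    then show False using ni[OF K L ne] by simp
  qed
  have "finite (tab ` S)" using img \<open>finite T\<close> finite_subset by blast
  then show ?thesis using inj finite_imageD by blast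
qed

lemma simple_bound:
  assumes "simple_group Q" "\<not> comm_group Q" "A \<lhd> Q" "comm_group (Q\<lparr>carrier := A\<rparr>)"
    "card (carrier Q) \<le> d * card A"
  shows "card (carrier Q) \<le> d"
proof -
  interpret simple_group Q by fact
  have "A = carrier Q \<or> A = {\<one>\<^bsub>Q\<^esub>}" using no_real_normal_subgroup assms(3) by blast
  moreover have "A \<noteq> carrier Q"
  proof
    assume "A = carrier Q"
    then have "Q\<lparr>carrier := A\<rparr> = Q" by simp
    then show False using assms(2,4) by metis
  qed
  ultimately have "card A = 1" by simp
  then show ?thesis using assms(5) by simp
qed

theorem theorem1p12:
  fixes G :: "('a, 'b) monoid_scheme" and H :: "'a set" and S :: "'a set set"
  assumes "group G"
    and "H \<lhd> G"
    and "jordan_group (G\<lparr>carrier := H\<rparr>)"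
    and "jordan_group (G Mod H)"
    and "\<And>K. K \<in> S \<Longrightarrow> subgroup K G \<and> finite K \<and>
             simple_group (G\<lparr>carrier := K\<rparr>) \<and> \<not> comm_group (G\<lparr>carrier := K\<rparr>)"
    and "\<And>K L. K \<in> S \<Longrightarrow> L \<in> S \<Longrightarrow> K \<noteq> L \<Longrightarrow>
             \<not> (G\<lparr>carrier := K\<rparr> \<cong> G\<lparr>carrier := L\<rparr>)"
  shows "finite S"
proof -
  interpret G: group G by fact
  interpret N: normal H G by fact
  interpret Q: group "G Mod H" by (rule N.factorgroup_is_group)
  obtain d1 where d1: "\<And>K. subgroup K (G\<lparr>carrier := H\<rparr>) \<Longrightarrow> finite K \<Longrightarrow>
     \<exists>A. A \<lhd> ((G\<lparr>carrier := H\<rparr>)\<lparr>carrier := K\<rparr>) \<and> comm_group ((G\<lparr>carrier := H\<rparr>)\<lparr>carrier := A\<rparr>) \<and> card K \<le> d1 * card A"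
    using assms(3) unfolding jordan_group_def by blast
  obtain d2 where d2: "\<And>K. subgroup K (G Mod H) \<Longrightarrow> finite K \<Longrightarrow>
     \<exists>A. A \<lhd> ((G Mod H)\<lparr>carrier := K\<rparr>) \<and> comm_group ((G Mod H)\<lparr>carrier := A\<rparr>) \<and> card K \<le> d2 * card A"
    using assms(4) unfolding jordan_group_def by blast
  have bound: "card K \<le> max d1 d2" if K: "K \<in> S" for K
  proof -
    have sK: "subgroup K G" and fK: "finite K" and simK: "simple_group (G\<lparr>carrier := K\<rparr>)"
      and ncK: "\<not> comm_group (G\<lparr>carrier := K\<rparr>)" using assms(5)[OF K] by blast+
    interpret sim: simple_group "G\<lparr>carrier := K\<rparr>" by (rule simK)
    have "(H \<inter> K) \<lhd> G\<lparr>carrier := K\<rparr>" using G.normal_Int_subgroup[OF sK assms(2)] .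
    then have "H \<inter> K = carrier (G\<lparr>carrier := K\<rparr>) \<or> H \<inter> K = {\<one>\<^bsub>G\<lparr>carrier := K\<rparr>\<^esub>}" by (rule sim.no_real_normal_subgroup)
    then have "H \<inter> K = K \<or> H \<inter> K = {\<one>\<^bsub>G\<^esub>}" by simp
    then show ?thesis
    proof
      assume "H \<inter> K = K"
      then have "K \<subseteq> H" by blast
      then have "subgroup K (G\<lparr>carrier := H\<rparr>)"
        using G.subgroup_incl[OF sK N.subgroup_axioms] by simp
      then obtain A where A: "A \<lhd> G\<lparr>carrier := K\<rparr>" "comm_group (G\<lparr>carrier := A\<rparr>)" "card K \<le> d1 * card A"
        using d1 fK by auto
      have "card (carrier (G\<lparr>carrier := K\<rparr>)) \<le> d1"
        by (rule simple_bound[OF simK ncK A(1)]) (use A in auto)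
      then show ?thesis by simp
    next
      assume HK: "H \<inter> K = {\<one>\<^bsub>G\<^esub>}"
      define h where "h = (\<lambda>a. H #>\<^bsub>G\<^esub> a)"
      define K' where "K' = h ` K"
      have hhom: "h \<in> hom G (G Mod H)" unfolding h_def by (rule N.r_coset_hom_Mod)
      interpret gh: group_hom G "G Mod H" h
        using hhom by (simp add: group_hom_def group_hom_axioms_def G.group_axioms Q.group_axioms)
      have sK': "subgroup K' (G Mod H)" unfolding K'_def by (rule gh.subgroup_img_is_subgroup[OF sK])
      have injh: "inj_on h K"
      proof (rule inj_onI)
        fix x y assume xy: "x \<in> K" "y \<in> K" "h x = h y"
        have xG: "x \<in> carrier G" "y \<in> carrier G" using xy sK subgroup.subset by blast+
        have "x \<otimes>\<^bsub>G\<^esub> inv\<^bsub>G\<^esub> y \<in> H"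
          using xy(3) xG unfolding h_def
        proof -
          have "x \<in> H #>\<^bsub>G\<^esub> y" using xy(3) xG G.rcos_self[OF xG(1) N.subgroup_axioms] unfolding h_def by simp
          then show ?thesis using N.rcos_module_imp[OF G.group_axioms xG(2)] by blast
        qed
        moreover have "x \<otimes>\<^bsub>G\<^esub> inv\<^bsub>G\<^esub> y \<in> K" using xy sK by (simp add: subgroup.m_inv_closed subgroup.m_closed)
        ultimately have "x \<otimes>\<^bsub>G\<^esub> inv\<^bsub>G\<^esub> y = \<one>\<^bsub>G\<^esub>" using HK by blast
        then have "(x \<otimes>\<^bsub>G\<^esub> inv\<^bsub>G\<^esub> y) \<otimes>\<^bsub>G\<^esub> y = y" using xG by simp
        then show "x = y" using xG by (simp add: G.m_assoc)
      qed
      have iso: "h \<in> iso (G\<lparr>carrier := K\<rparr>) ((G Mod H)\<lparr>carrier := K'\<rparr>)"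
      proof (rule isoI)
        show "bij_betw h (carrier (G\<lparr>carrier := K\<rparr>)) (carrier ((G Mod H)\<lparr>carrier := K'\<rparr>))"
          using injh unfolding K'_def bij_betw_def by simp
        show "h \<in> hom (G\<lparr>carrier := K\<rparr>) ((G Mod H)\<lparr>carrier := K'\<rparr>)"
        proof (rule homI)
          fix x assume "x \<in> carrier (G\<lparr>carrier := K\<rparr>)"
          then show "h x \<in> carrier ((G Mod H)\<lparr>carrier := K'\<rparr>)" unfolding K'_def by simp
        next
          fix x y assume "x \<in> carrier (G\<lparr>carrier := K\<rparr>)" "y \<in> carrier (G\<lparr>carrier := K\<rparr>)"
          then have "x \<in> carrier G" "y \<in> carrier G" using sK subgroup.subset by auto
          then show "h (x \<otimes>\<^bsub>G\<lparr>carrier := K\<rparr>\<^esub> y) = h x \<otimes>\<^bsub>(G Mod H)\<lparr>carrier := K'\<rparr>\<^esub> h y"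
            by simp
        qed
      qed
      have gK': "group ((G Mod H)\<lparr>carrier := K'\<rparr>)" using Q.subgroup_imp_group[OF sK'] .
      have simK': "simple_group ((G Mod H)\<lparr>carrier := K'\<rparr>)" by (rule sim.iso_simple[OF gK' iso])
      have ncK': "\<not> comm_group ((G Mod H)\<lparr>carrier := K'\<rparr>)"
      proof
        assume c: "comm_group ((G Mod H)\<lparr>carrier := K'\<rparr>)"
        have "G\<lparr>carrier := K\<rparr> \<cong> (G Mod H)\<lparr>carrier := K'\<rparr>" using iso by (rule is_isoI)
        then have "(G Mod H)\<lparr>carrier := K'\<rparr> \<cong> G\<lparr>carrier := K\<rparr>" by (rule sim.iso_sym)
        moreover have "monoid (G\<lparr>carrier := K\<rparr>)" by (rule sim.is_monoid)
        ultimately have "comm_group (G\<lparr>carrier := K\<rparr>)" using comm_group.iso_imp_comm_group[OF c] by blast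
        then show False using ncK by simp
      qed
      have cK: "card K' = card K" unfolding K'_def using card_image[OF injh] .
      have fK': "finite K'" unfolding K'_def using fK by simp
      obtain A where A: "A \<lhd> (G Mod H)\<lparr>carrier := K'\<rparr>" "comm_group ((G Mod H)\<lparr>carrier := A\<rparr>)" "card K' \<le> d2 * card A"
        using d2[OF sK' fK'] by auto
      have "card (carrier ((G Mod H)\<lparr>carrier := K'\<rparr>)) \<le> d2"
        by (rule simple_bound[OF simK' ncK' A(1)]) (use A in auto)
      then show ?thesis using cK by simp
    qed
  qed
  show ?thesis
  proof (rule finite_noniso[of S "max d1 d2" G])
    fix K assume K: "K \<in> S"
    then show "finite K \<and> card K \<le> max d1 d2 \<and> (\<forall>x\<in>K. \<forall>y\<in>K. x \<otimes>\<^bsub>G\<^esub> y \<in> K)"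
    proof -
      have "subgroup K G" "finite K" using assms(5)[OF K] by blast+
      then show ?thesis using bound[OF K] by (simp add: subgroup.m_closed)
    qed
  qed (use assms(6) in blast)
qed

end
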